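(* Fix $\Delta>0$. In the $\mathrm{EDD}(\lambda)$ model with a global clock, the probability that a run of the protocol $\mathrm{CORE}(\Delta)$ is correct is at least $(1-e^{-\lambda\Delta})^n$.
   Context: Agents $i_0,i_1,\ldots,i_n$ share an accurate global clock and are connected by a complete reliable network; the delay of each message is an independent exponential random variable with parameter $\lambda$. At time $0$ the supervisor $i_0$ receives an external input. Protocol $\mathrm{CORE}(\Delta)$: at time $0$, $i_0$ sends a "trigger" message to each of $i_1,\ldots,i_n$; upon receiving the trigger, agent $i_k$ waits until the global time is at least $\Delta$ and then performs its action $\alpha_k$ (acting immediately if the trigger arrives after time $\Delta$). Letting $t_k$ be the time at which $i_k$ performs $\alpha_k$, a run is correct if $t_1\le t_2\le\cdots\le t_n<\infty$. *)

theory Defs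
  imports "HOL-Probability.Probability"
begin

text \<open>EDD model: the delay of the trigger message from i0 to agent i_k is d k.
  Under CORE(Delta), agent i_k acts at time t_k = max Delta (d k).\<close>

definition core_time :: "real \<Rightarrow> (nat \<Rightarrow> real) \<Rightarrow> nat \<Rightarrow> real" where
  "core_time \<Delta> d k = max \<Delta> (d k)"

definition core_correct :: "real \<Rightarrow> nat \<Rightarrow> (nat \<Rightarrow> real) \<Rightarrow> bool" where
  "core_correct \<Delta> n d \<longleftrightarrow> (\<forall>k. 1 \<le> k \<and> k < n \<longrightarrow> core_time \<Delta> d k \<le> core_time \<Delta> d (Suc k))"

end

theory Submission
  imports Defs
begin

theorem corollary1:
  fixes M :: "'a measure" and D :: "nat \<Rightarrow> 'a \<Rightarrow> real"
    and l \<Delta> :: real and n :: nat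
  assumes "prob_space M"
    and "l > 0" and "\<Delta> > 0"
    and "prob_space.indep_vars M (\<lambda>_. borel) D {1..n}"
    and "\<And>k. k \<in> {1..n} \<Longrightarrow> distributed M lborel (D k) (exponential_density l)"
  shows "measure M {\<omega> \<in> space M. core_correct \<Delta> n (\<lambda>k. D k \<omega>)}
           \<ge> (1 - exp (- l * \<Delta>)) ^ n"
proof -
  interpret prob_space M by fact
  have rv: "\<And>k. k \<in> {1..n} \<Longrightarrow> D k \<in> borel_measurable M"
    using assms(4) unfolding indep_vars_def2 by auto
  have ind: "indep_sets (\<lambda>i. { D i -` A \<inter> space M | A. A \<in> sets borel}) {1..n}"
    using assms(4) unfolding indep_vars_def2 by auto
  define A where "A k = D k -` {..\<Delta>} \<inter> space M" for k
  have pA: "prob (A k) = 1 - exp (- l * \<Delta>)" if "k \<in> {1..n}" for k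
  proof -
    have "prob (A k) = \<P>(x in M. D k x \<le> \<Delta>)"
      unfolding A_def by (auto intro!: arg_cong[where f=prob])
    also have "\<dots> = 1 - exp (- \<Delta> * l)"
      using exponential_distributedD_le[OF assms(5)[OF that]] assms(2,3) by simp
    finally show ?thesis by (simp add: mult.commute)
  qed
  let ?C = "{\<omega> \<in> space M. core_correct \<Delta> n (\<lambda>k. D k \<omega>)}"
  have Ceq: "?C = {\<omega> \<in> space M. \<forall>k\<in>{1..<n}. max \<Delta> (D k \<omega>) \<le> max \<Delta> (D (Suc k) \<omega>)}"
    unfolding core_correct_def core_time_def by auto
  have Cmeas: "?C \<in> events"
    unfolding Ceq
  proof (intro sets.sets_Collect_finite_All)
    fix k assume k: "k \<in> {1..<n}"
    then have "D k \<in> borel_measurable M" "D (Suc k) \<in> borel_measurable M"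
      using rv by auto
    then show "{\<omega> \<in> space M. max \<Delta> (D k \<omega>) \<le> max \<Delta> (D (Suc k) \<omega>)} \<in> events"
      by measurable
  qed auto
  show ?thesis
  proof (cases "n = 0")
    case True
    have "?C = space M" using True unfolding core_correct_def by auto
    then show ?thesis using True by (simp add: prob_space)
  next
    case False
    have "prob (\<Inter>k\<in>{1..n}. A k) = (\<Prod>k\<in>{1..n}. prob (A k))"
      using False unfolding A_def
      by (intro indep_setsD[OF ind]) (auto intro!: exI[where x="{..\<Delta>}"])
    also have "\<dots> = (1 - exp (- l * \<Delta>)) ^ n"
      using pA by simp
    finally have eq: "prob (\<Inter>k\<in>{1..n}. A k) = (1 - exp (- l * \<Delta>)) ^ n" .
    have sub: "(\<Inter>k\<in>{1..n}. A k) \<subseteq> ?C"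
    proof
      fix \<omega> assume "\<omega> \<in> (\<Inter>k\<in>{1..n}. A k)"
      then have h: "\<And>k. k \<in> {1..n} \<Longrightarrow> D k \<omega> \<le> \<Delta> \<and> \<omega> \<in> space M"
        unfolding A_def by auto
      show "\<omega> \<in> ?C"
      proof -
        have "\<omega> \<in> space M" using h[of 1] False by auto
        moreover have "core_correct \<Delta> n (\<lambda>k. D k \<omega>)"
          unfolding core_correct_def core_time_def
        proof (intro allI impI)
          fix k assume k: "1 \<le> k \<and> k < n"
          have "D k \<omega> \<le> \<Delta>" "D (Suc k) \<omega> \<le> \<Delta>" using h[of k] h[of "Suc k"] k by auto
          then show "max \<Delta> (D k \<omega>) \<le> max \<Delta> (D (Suc k) \<omega>)" by simp
        qed
        ultimately show ?thesis by simp
      qed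
    qed
    show ?thesis
      using finite_measure_mono[OF sub Cmeas] eq by simp
  qed
qed

end
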